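(* Let $G_n$ be a finite simple graph with a fully interconnected graph decomposition $(G_{n_1},\ldots,G_{n_k})$. For each $i\in\{1,\ldots,k\}$ let $\lambda_{i,1},\ldots,\lambda_{i,n_i-1}$ be eigenvalues of $L_{G_{n_i}}$ with real eigenvectors $\mathbf v_{i,1},\ldots,\mathbf v_{i,n_i-1}\in\mathbb R^{V(G_{n_i})}$ such that $\{\mathbf v_{i,1},\ldots,\mathbf v_{i,n_i-1},\tfrac{1}{\sqrt{n_i}}\mathbf 1_{n_i}\}$ is an orthonormal basis of $\mathbb R^{V(G_{n_i})}$. For $j=1,\ldots,k$ let $\alpha_j(1),\ldots,\alpha_j(k)\in\mathbb R$ and let $\mathbf x_j\in\mathbb R^{V(G_n)}$ be the vector with $\mathbf x_j(v)=\alpha_j(l)$ for $v\in V(G_{n_l})$; put $N_j=\sum_{l=1}^k n_l\alpha_j(l)^2$. Assume $\{\mathbf x_j/\sqrt{N_j}\}_{j=1}^k$ is orthonormal and $L_{G_n}\mathbf x_j=\nu_j\mathbf x_j$ for real numbers $\nu_1,\ldots,\nu_k$ (equivalently, $\overline{L}_{G_n}(\alpha_j(1),\ldots,\alpha_j(k))^T=\nu_j(\alpha_j(1),\ldots,\alpha_j(k))^T$). Then for all $t\ge0$: (1) If $x,y\in V(G_{n_i})$, then $$P^x_{G_n,t}(y)=P^x_{G_{n_i},t}(y)+\widetilde P_{i,t}-\frac1{n_i^2}-\frac2{n_i}\sum_{j=1}^{n_i-1}\mathbf v_{i,j}(x)\mathbf v_{i,j}(y)\cos(t\lambda_{i,j})+2\sum_{j=1}^{n_i-1}\sum_{j'=1}^k\frac{\mathbf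 v_{i,j}(x)\mathbf v_{i,j}(y)\alpha_{j'}(i)^2\cos\{t(\lambda_{i,j}+\widetilde d_i-\nu_{j'})\}}{N_{j'}},$$ where $$P^x_{G_{n_i},t}(y)=\sum_{j=1}^{n_i-1}\mathbf v_{i,j}(x)^2\mathbf v_{i,j}(y)^2+\frac1{n_i^2}+2\sum_{1\le j<j'\le n_i-1}\mathbf v_{i,j}(x)\mathbf v_{i,j}(y)\mathbf v_{i,j'}(x)\mathbf v_{i,j'}(y)\cos\{t(\lambda_{i,j}-\lambda_{i,j'})\}+\frac2{n_i}\sum_{j=1}^{n_i-1}\mathbf v_{i,j}(x)\mathbf v_{i,j}(y)\cos(t\lambda_{i,j})$$ is the transition probability of the CTQW on $G_{n_i}$ itself, and $$\widetilde P_{i,t}=\sum_{j=1}^k\frac{\alpha_j(i)^4}{N_j^2}+2\sum_{1\le j<j'\le k}\frac{\alpha_j(i)^2\alpha_{j'}(i)^2\cos\{t(\nu_j-\nu_{j'})\}}{N_jN_{j'}}.$$ (2) If $x\in V(G_{n_i})$ and $y\in V(G_{n_{i'}})$ with $i\ne i'$, then $$P^x_{G_n,t}(y)=\sum_{j=1}^k\frac{\alpha_j(i)^2\alpha_j(i')^2}{N_j^2}+2\sum_{1\le j<j'\le k}\frac{\alpha_j(i)\alpha_j(i')\alpha_{j'}(i)\alpha_{j'}(i')\cos\{t(\nu_j-\nu_{j'})\}}{N_jN_{j'}}.$$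
   Context: For a finite simple graph $G$ with vertex set $V(G)$, $A_G$ is its adjacency matrix, $D_G$ the diagonal degree matrix, and $L_G=D_G-A_G$ its Laplacian. The continuous-time quantum walk (CTQW) on $G$ has evolution operator $U_{G,t}=e^{\sqrt{-1}\,tL_G}$ ($t\ge0$), and for $x,y\in V(G)$ the transition probability is $P^x_{G,t}(y)=|(U_{G,t})_{x,y}|^2$ (walker starting at $x$). A fully interconnected graph decomposition of a simple graph $G_n$ on $n$ vertices is a tuple $(G_{n_1},\ldots,G_{n_k})$ of induced subgraphs of $G_n$, $G_{n_i}$ having $n_i$ vertices, whose vertex sets partition $V(G_n)$, such that for every $i\ne j$ either every vertex of $G_{n_i}$ is adjacent to every vertex of $G_{n_j}$ (written $G_{n_i}\sim G_{n_j}$) or no vertex of $G_{n_i}$ is adjacent to any vertex of $G_{n_j}$. Set $\widetilde d_i=\sum_{j:\,G_{n_i}\sim G_{n_j}}n_j$. $\overline L_{G_n}$ is the $k\times k$ matrix with diagonal entries $\widetilde d_i$, $(i,j)$ entry $-n_j$ if $G_{n_i}\sim G_{n_j}$ ($i\neq j$), and $0$ otherwise. $\mathbf 1_m$ is the all-ones vector of length $m$; $\mathbf v(x)$ denotes the component of a vector at vertex $x$. *)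

theory Defs
  imports "HOL-Analysis.Analysis"
begin

definition simple_graph :: "'a set \<Rightarrow> ('a \<Rightarrow> 'a \<Rightarrow> bool) \<Rightarrow> bool" where
  "simple_graph V E \<longleftrightarrow> finite V \<and> (\<forall>x y. E x y \<longrightarrow> x \<in> V \<and> y \<in> V)
     \<and> (\<forall>x y. E x y \<longrightarrow> E y x) \<and> (\<forall>x. \<not> E x x)"

text \<open>Laplacian L = D - A of the (induced) graph on vertex set W with edge relation E;
  only entries with both indices in W are meaningful.\<close>
definition laplacian :: "'a set \<Rightarrow> ('a \<Rightarrow> 'a \<Rightarrow> bool) \<Rightarrow> 'a \<Rightarrow> 'a \<Rightarrow> real" where
  "laplacian W E x y =
     (if x = y then real (card {z \<in> W. E x z}) else if E x y then -1 else 0)"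

fun mat_pow :: "'a set \<Rightarrow> ('a \<Rightarrow> 'a \<Rightarrow> real) \<Rightarrow> nat \<Rightarrow> 'a \<Rightarrow> 'a \<Rightarrow> real" where
  "mat_pow W A 0 x y = (if x = y then 1 else 0)"
| "mat_pow W A (Suc m) x y = (\<Sum>z\<in>W. A x z * mat_pow W A m z y)"

definition ctqw_op :: "'a set \<Rightarrow> ('a \<Rightarrow> 'a \<Rightarrow> bool) \<Rightarrow> real \<Rightarrow> 'a \<Rightarrow> 'a \<Rightarrow> complex" where
  "ctqw_op W E t x y =
     (\<Sum>m. (\<i> * complex_of_real t) ^ m / of_nat (fact m)
            * complex_of_real (mat_pow W (laplacian W E) m x y))"

definition ctqw_prob :: "'a set \<Rightarrow> ('a \<Rightarrow> 'a \<Rightarrow> bool) \<Rightarrow> real \<Rightarrow> 'a \<Rightarrow> 'a \<Rightarrow> real" where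
  "ctqw_prob W E t x y = (cmod (ctqw_op W E t x y))^2"

definition parts_adj :: "('a \<Rightarrow> 'a \<Rightarrow> bool) \<Rightarrow> (nat \<Rightarrow> 'a set) \<Rightarrow> nat \<Rightarrow> nat \<Rightarrow> bool" where
  "parts_adj E P i j \<longleftrightarrow> (\<forall>x\<in>P i. \<forall>y\<in>P j. E x y)"

text \<open>Fully interconnected graph decomposition (P 1, ..., P k) of (V,E), parts given by
  their (nonempty) vertex sets; the parts are the induced subgraphs on these sets.\<close>
definition fully_interconnected_decomp ::
  "'a set \<Rightarrow> ('a \<Rightarrow> 'a \<Rightarrow> bool) \<Rightarrow> nat \<Rightarrow> (nat \<Rightarrow> 'a set) \<Rightarrow> bool" where
  "fully_interconnected_decomp V E k P \<longleftrightarrow>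
     (\<forall>i\<in>{1..k}. P i \<noteq> {} \<and> P i \<subseteq> V)
     \<and> (\<Union>i\<in>{1..k}. P i) = V
     \<and> (\<forall>i\<in>{1..k}. \<forall>j\<in>{1..k}. i \<noteq> j \<longrightarrow> P i \<inter> P j = {})
     \<and> (\<forall>i\<in>{1..k}. \<forall>j\<in>{1..k}. i \<noteq> j \<longrightarrow>
          parts_adj E P i j \<or> (\<forall>x\<in>P i. \<forall>y\<in>P j. \<not> E x y))"

definition dtilde :: "('a \<Rightarrow> 'a \<Rightarrow> bool) \<Rightarrow> nat \<Rightarrow> (nat \<Rightarrow> 'a set) \<Rightarrow> nat \<Rightarrow> real" where
  "dtilde E k P i = (\<Sum>j\<in>{j\<in>{1..k}. j \<noteq> i \<and> parts_adj E P i j}. real (card (P j)))"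

end

theory Submission
  imports Defs "Jordan_Normal_Form.Determinant"
begin
lemma spectral_pow:
  fixes M :: "'a \<Rightarrow> 'a \<Rightarrow> real" and u :: "'b \<Rightarrow> 'a \<Rightarrow> real" and w :: "'c \<Rightarrow> 'a \<Rightarrow> real"
  assumes fW: "finite W" and fA: "finite A" and fD: "finite D"
    and eigA: "\<forall>a\<in>A. \<forall>x\<in>W. (\<Sum>z\<in>W. M x z * u a z) = mu a * u a x"
    and eigD: "\<forall>d\<in>D. \<forall>x\<in>W. (\<Sum>z\<in>W. M x z * w d z) = rho d * w d x"
    and compl: "\<forall>x\<in>W. \<forall>y\<in>W. (\<Sum>a\<in>A. u a x * u a y) + (\<Sum>d\<in>D. w d x * w d y) = (if x = y then 1 else 0)"
    and y: "y \<in> W"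
  shows "x \<in> W \<Longrightarrow> mat_pow W M m x y = (\<Sum>a\<in>A. mu a ^ m * u a x * u a y) + (\<Sum>d\<in>D. rho d ^ m * w d x * w d y)"
proof (induction m arbitrary: x)
  case 0
  then show ?case using compl y by simp
next
  case (Suc m)
  have "mat_pow W M (Suc m) x y = (\<Sum>z\<in>W. M x z * ((\<Sum>a\<in>A. mu a ^ m * u a z * u a y) + (\<Sum>d\<in>D. rho d ^ m * w d z * w d y)))"
    using Suc.IH by simp
  also have "\<dots> = (\<Sum>a\<in>A. mu a ^ m * u a y * (\<Sum>z\<in>W. M x z * u a z)) + (\<Sum>d\<in>D. rho d ^ m * w d y * (\<Sum>z\<in>W. M x z * w d z))"
    by (simp add: distrib_left sum.distrib sum_distrib_left sum_distrib_right sum.swap[of _ W] mult_ac)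
  also have "\<dots> = (\<Sum>a\<in>A. mu a ^ Suc m * u a x * u a y) + (\<Sum>d\<in>D. rho d ^ Suc m * w d x * w d y)"
    using eigA eigD Suc.prems by (simp add: mult_ac)
  finally show ?case .
qed
lemma exp_series_sums:
  "(\<lambda>m. (\<i> * complex_of_real t) ^ m / of_nat (fact m) * complex_of_real (mu ^ m)) sums exp (\<i> * complex_of_real (t * mu))"
proof -
  have "(\<lambda>m. (\<i> * complex_of_real (t * mu)) ^ m /\<^sub>R fact m) sums exp (\<i> * complex_of_real (t * mu))"
    by (rule exp_converges)
  moreover have "\<And>m. (\<i> * complex_of_real (t * mu)) ^ m /\<^sub>R fact m = (\<i> * complex_of_real t) ^ m / of_nat (fact m) * complex_of_real (mu ^ m)"
    by (simp add: scaleR_conv_of_real power_mult_distrib field_simps)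
  ultimately show ?thesis by simp
qed
lemma ctqw_spectral:
  fixes u :: "'b \<Rightarrow> 'a \<Rightarrow> real" and w :: "'c \<Rightarrow> 'a \<Rightarrow> real"
  assumes fW: "finite W" and fA: "finite A" and fD: "finite D"
    and eigA: "\<forall>a\<in>A. \<forall>x\<in>W. (\<Sum>z\<in>W. laplacian W E x z * u a z) = mu a * u a x"
    and eigD: "\<forall>d\<in>D. \<forall>x\<in>W. (\<Sum>z\<in>W. laplacian W E x z * w d z) = rho d * w d x"
    and compl: "\<forall>x\<in>W. \<forall>y\<in>W. (\<Sum>a\<in>A. u a x * u a y) + (\<Sum>d\<in>D. w d x * w d y) = (if x = y then 1 else 0)"
    and x: "x \<in> W" and y: "y \<in> W"
  shows "ctqw_op W E t x y = (\<Sum>a\<in>A. complex_of_real (u a x * u a y) * exp (\<i> * complex_of_real (t * mu a)))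
            + (\<Sum>d\<in>D. complex_of_real (w d x * w d y) * exp (\<i> * complex_of_real (t * rho d)))"
proof -
  have mp: "\<And>m. mat_pow W (laplacian W E) m x y = (\<Sum>a\<in>A. mu a ^ m * u a x * u a y) + (\<Sum>d\<in>D. rho d ^ m * w d x * w d y)"
    using spectral_pow[OF fW fA fD eigA eigD compl y x] .
  have eq: "\<And>m. (\<i> * complex_of_real t) ^ m / of_nat (fact m) * complex_of_real (mat_pow W (laplacian W E) m x y)
     = (\<Sum>a\<in>A. complex_of_real (u a x * u a y) * ((\<i> * complex_of_real t) ^ m / of_nat (fact m) * complex_of_real (mu a ^ m)))
     + (\<Sum>d\<in>D. complex_of_real (w d x * w d y) * ((\<i> * complex_of_real t) ^ m / of_nat (fact m) * complex_of_real (rho d ^ m)))"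
    unfolding mp by (simp add: distrib_left sum_distrib_left mult_ac)
  have "(\<lambda>m. (\<i> * complex_of_real t) ^ m / of_nat (fact m) * complex_of_real (mat_pow W (laplacian W E) m x y)) sums
      ((\<Sum>a\<in>A. complex_of_real (u a x * u a y) * exp (\<i> * complex_of_real (t * mu a)))
            + (\<Sum>d\<in>D. complex_of_real (w d x * w d y) * exp (\<i> * complex_of_real (t * rho d))))"
    unfolding eq
    by (intro sums_add sums_sum sums_mult exp_series_sums)
  then show ?thesis unfolding ctqw_op_def by (rule sums_unique[symmetric])
qed
lemma modsq_two:
  fixes c :: "'b \<Rightarrow> real" and e :: "'c \<Rightarrow> real"
  shows "(cmod ((\<Sum>a\<in>A. complex_of_real (c a) * exp (\<i> * complex_of_real (th a)))
            + (\<Sum>d\<in>D. complex_of_real (e d) * exp (\<i> * complex_of_real (ph d)))))^2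
   = (\<Sum>a\<in>A. \<Sum>a'\<in>A. c a * c a' * cos (th a - th a'))
   + (\<Sum>d\<in>D. \<Sum>d'\<in>D. e d * e d' * cos (ph d - ph d'))
   + 2 * (\<Sum>a\<in>A. \<Sum>d\<in>D. c a * e d * cos (th a - ph d))"
proof -
  let ?z = "(\<Sum>a\<in>A. complex_of_real (c a) * exp (\<i> * complex_of_real (th a)))
            + (\<Sum>d\<in>D. complex_of_real (e d) * exp (\<i> * complex_of_real (ph d)))"
  have re: "Re ?z = (\<Sum>a\<in>A. c a * cos (th a)) + (\<Sum>d\<in>D. e d * cos (ph d))"
    by (simp add: Re_sum Re_exp)
  have im: "Im ?z = (\<Sum>a\<in>A. c a * sin (th a)) + (\<Sum>d\<in>D. e d * sin (ph d))"
    by (simp add: Im_sum Im_exp)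
  have "(cmod ?z)^2 = (Re ?z)^2 + (Im ?z)^2" by (simp add: cmod_power2)
  also have "\<dots> = (\<Sum>a\<in>A. \<Sum>a'\<in>A. c a * c a' * cos (th a - th a'))
   + (\<Sum>d\<in>D. \<Sum>d'\<in>D. e d * e d' * cos (ph d - ph d'))
   + 2 * (\<Sum>a\<in>A. \<Sum>d\<in>D. c a * e d * cos (th a - ph d))"
    unfolding re im cos_diff
    by (simp add: power2_eq_square algebra_simps sum_product sum.distrib sum_distrib_left sum.swap[of _ D A])
  finally show ?thesis .
qed
lemma tri_sum:
  fixes f :: "nat \<Rightarrow> nat \<Rightarrow> real"
  assumes sym: "\<And>j j'. f j j' = f j' j"
  shows "(\<Sum>j\<in>{1..m}. \<Sum>j'\<in>{1..m}. f j j') = (\<Sum>j\<in>{1..m}. f j j) + 2 * (\<Sum>j\<in>{1..m}. \<Sum>j'\<in>{j+1..m}. f j j')"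
proof (induction m)
  case 0
  then show ?case by simp
next
  case (Suc m)
  have S: "{1..Suc m} = insert (Suc m) {1..m}" by auto
  have ins: "\<And>j. j \<in> {1..m} \<Longrightarrow> {j+1..Suc m} = insert (Suc m) {j+1..m}" by auto
  have A: "(\<Sum>j\<in>{1..m}. \<Sum>j'\<in>{j+1..Suc m}. f j j') = (\<Sum>j\<in>{1..m}. \<Sum>j'\<in>{j+1..m}. f j j') + (\<Sum>j\<in>{1..m}. f j (Suc m))"
    unfolding sum.distrib[symmetric] by (rule sum.cong) (auto simp: ins)
  have B: "(\<Sum>j\<in>{1..Suc m}. \<Sum>j'\<in>{j+1..Suc m}. f j j') = (\<Sum>j\<in>{1..m}. \<Sum>j'\<in>{j+1..Suc m}. f j j')"
    unfolding S by simp
  have C: "(\<Sum>j\<in>{1..Suc m}. \<Sum>j'\<in>{1..Suc m}. f j j') = (\<Sum>j\<in>{1..m}. \<Sum>j'\<in>{1..m}. f j j') + (\<Sum>j\<in>{1..m}. f j (Suc m)) + (\<Sum>j'\<in>{1..m}. f (Suc m) j') + f (Suc m) (Suc m)"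
    unfolding S by (simp add: sum.distrib)
  have D: "(\<Sum>j'\<in>{1..m}. f (Suc m) j') = (\<Sum>j\<in>{1..m}. f j (Suc m))" using sym by simp
  show ?case unfolding B A C D Suc.IH unfolding S by simp
qed
lemma compl_from_span:
  fixes S :: "'a set" and vv :: "nat \<Rightarrow> 'a \<Rightarrow> real"
  assumes fS: "finite S" and ne: "S \<noteq> {}"
    and orth: "\<forall>j\<in>{1..m}. \<forall>j'\<in>{1..m}. (\<Sum>x\<in>S. vv j x * vv j' x) = (if j = j' then 1 else 0)"
    and orth1: "\<forall>j\<in>{1..m}. (\<Sum>x\<in>S. vv j x * (1 / sqrt (real (card S)))) = 0"
    and span: "\<forall>f :: 'a \<Rightarrow> real. \<exists>c :: nat \<Rightarrow> real. \<exists>c0 :: real.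
                  \<forall>x\<in>S. f x = (\<Sum>j\<in>{1..m}. c j * vv j x) + c0 * (1 / sqrt (real (card S)))"
    and x: "x \<in> S" and y: "y \<in> S"
  shows "(\<Sum>j\<in>{1..m}. vv j x * vv j y) + 1 / real (card S) = (if x = y then 1 else 0)"
proof -
  define s where "s = 1 / sqrt (real (card S))"
  have cpos: "real (card S) > 0" using fS ne by (simp add: card_gt_0_iff)
  have ss: "s * s = 1 / real (card S)" unfolding s_def using cpos
    by (simp add: field_simps)
  have sumv: "\<forall>j\<in>{1..m}. (\<Sum>x\<in>S. vv j x) = 0"
  proof
    fix j assume j: "j \<in> {1..m}"
    have "(\<Sum>x\<in>S. vv j x) / sqrt (real (card S)) = 0" using orth1 j by (simp add: sum_divide_distrib)
    then show "(\<Sum>x\<in>S. vv j x) = 0" using cpos by simp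
  qed
  define f where "f = (\<lambda>z. if z = y then (1::real) else 0)"
  obtain c c0 where fc: "\<forall>z\<in>S. f z = (\<Sum>j\<in>{1..m}. c j * vv j z) + c0 * s"
    using span unfolding s_def by blast
  have cj: "c j = vv j y" if j: "j \<in> {1..m}" for j
  proof -
    have "(\<Sum>z\<in>S. f z * vv j z) = (\<Sum>z\<in>S. if y = z then vv j y else 0)" by (rule sum.cong) (auto simp: f_def)
    also have "\<dots> = vv j y" using y fS by simp
    finally have "(\<Sum>z\<in>S. f z * vv j z) = vv j y" .
    moreover have "(\<Sum>z\<in>S. f z * vv j z) = (\<Sum>z\<in>S. (\<Sum>j'\<in>{1..m}. c j' * vv j' z) * vv j z + c0 * s * vv j z)"
      using fc by (intro sum.cong) (auto simp: distrib_right)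
    moreover have "\<dots> = (\<Sum>j'\<in>{1..m}. c j' * (\<Sum>z\<in>S. vv j' z * vv j z)) + c0 * s * (\<Sum>z\<in>S. vv j z)"
      by (simp add: sum.distrib sum_distrib_left sum_distrib_right sum.swap[of _ S] mult_ac)
    moreover have "(\<Sum>j'\<in>{1..m}. c j' * (\<Sum>z\<in>S. vv j' z * vv j z)) = (\<Sum>j'\<in>{1..m}. if j' = j then c j else 0)"
      using orth j by (intro sum.cong) auto
    ultimately show ?thesis using sumv j by simp
  qed
  have c0: "c0 * s = s * s"
  proof -
    have "(\<Sum>z\<in>S. f z) = 1" using y fS unfolding f_def by (simp add: eq_commute[of _ y])
    moreover have "(\<Sum>z\<in>S. f z) = (\<Sum>z\<in>S. (\<Sum>j'\<in>{1..m}. c j' * vv j' z) + c0 * s)"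
      using fc by (intro sum.cong) auto
    moreover have "\<dots> = (\<Sum>j'\<in>{1..m}. c j' * (\<Sum>z\<in>S. vv j' z)) + c0 * s * real (card S)"
      by (simp add: sum.distrib sum_distrib_left sum.swap[of _ S])
    ultimately have "c0 * s * real (card S) = 1" using sumv by simp
    then have "c0 * s = 1 / real (card S)" using cpos by (simp add: field_simps)
    then show ?thesis using ss by simp
  qed
  have "f x = (\<Sum>j\<in>{1..m}. c j * vv j x) + c0 * s" using fc x by blast
  also have "\<dots> = (\<Sum>j\<in>{1..m}. vv j x * vv j y) + 1 / real (card S)"
    using cj c0 ss by (simp add: mult.commute)
  finally show ?thesis by (simp add: f_def)
qed
lemma orth_rows_cols0:
  fixes a :: "nat \<Rightarrow> nat \<Rightarrow> real"
  assumes "\<forall>j<k. \<forall>j'<k. (\<Sum>l<k. a j l * a j' l) = (if j = j' then 1 else 0)"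
  shows "\<forall>l<k. \<forall>l'<k. (\<Sum>j<k. a j l * a j l') = (if l = l' then 1 else 0)"
proof -
  define M where "M = mat k k (\<lambda>(j,l). a j l)"
  have M: "M \<in> carrier_mat k k" and MT: "transpose_mat M \<in> carrier_mat k k" unfolding M_def by auto
  have "M * transpose_mat M = 1\<^sub>m k"
    apply (rule eq_matI) using assms by (auto simp: M_def scalar_prod_def atLeast0LessThan)
  from mat_mult_left_right_inverse[OF M MT this] have "transpose_mat M * M = 1\<^sub>m k" .
  then have "\<And>l l'. l<k \<Longrightarrow> l'<k \<Longrightarrow> (transpose_mat M * M) $$ (l,l') = 1\<^sub>m k $$ (l,l')" by simp
  then show ?thesis by (auto simp: M_def scalar_prod_def atLeast0LessThan)
qed

lemma sum_1k: "(\<Sum>l\<in>{1..k}. g l) = (\<Sum>l<k. g (Suc l))"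
  by (simp add: sum.atLeast1_atMost_eq)

lemma orth_rows_cols:
  fixes a :: "nat \<Rightarrow> nat \<Rightarrow> real"
  assumes "\<forall>j\<in>{1..k}. \<forall>j'\<in>{1..k}. (\<Sum>l\<in>{1..k}. a j l * a j' l) = (if j = j' then 1 else 0)"
  shows "\<forall>l\<in>{1..k}. \<forall>l'\<in>{1..k}. (\<Sum>j\<in>{1..k}. a j l * a j l') = (if l = l' then 1 else 0)"
proof (intro ballI)
  fix l l' assume l: "l \<in> {1..k}" and l': "l' \<in> {1..k}"
  have "\<forall>j<k. \<forall>j'<k. (\<Sum>l<k. a (Suc j) (Suc l) * a (Suc j') (Suc l)) = (if j = j' then 1 else 0)"
    using assms by (auto simp: sum.atLeast1_atMost_eq)
  from orth_rows_cols0[OF this] have H: "\<forall>l<k. \<forall>l'<k. (\<Sum>j<k. a (Suc j) (Suc l) * a (Suc j) (Suc l')) = (if l = l' then 1 else 0)" .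
  have a: "l - 1 < k" "l' - 1 < k" and b: "Suc (l - 1) = l" "Suc (l' - 1) = l'" using l l' by auto
  have "(\<Sum>j<k. a (Suc j) l * a (Suc j) l') = (if l - 1 = l' - 1 then 1 else 0)"
    using H[rule_format, OF a] unfolding b .
  moreover have "(l - 1 = l' - 1) = (l = l')" using l l' by auto
  ultimately show "(\<Sum>j\<in>{1..k}. a j l * a j l') = (if l = l' then 1 else 0)" by (simp add: sum.atLeast1_atMost_eq)
qed

theorem lemma2p1:
  fixes V :: "'a set" and E :: "'a \<Rightarrow> 'a \<Rightarrow> bool" and k :: nat and P :: "nat \<Rightarrow> 'a set"
    and v :: "nat \<Rightarrow> nat \<Rightarrow> 'a \<Rightarrow> real" and lam :: "nat \<Rightarrow> nat \<Rightarrow> real"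
    and alpha :: "nat \<Rightarrow> nat \<Rightarrow> real" and X :: "nat \<Rightarrow> 'a \<Rightarrow> real"
    and N :: "nat \<Rightarrow> real" and nu :: "nat \<Rightarrow> real" and t :: real
  assumes graph: "simple_graph V E"
    and decomp: "fully_interconnected_decomp V E k P"
    and v_eig: "\<forall>i\<in>{1..k}. \<forall>j\<in>{1..card (P i) - 1}. \<forall>x\<in>P i.
                  (\<Sum>y\<in>P i. laplacian (P i) E x y * v i j y) = lam i j * v i j x"
    and v_orth: "\<forall>i\<in>{1..k}. \<forall>j\<in>{1..card (P i) - 1}. \<forall>j'\<in>{1..card (P i) - 1}.
                  (\<Sum>x\<in>P i. v i j x * v i j' x) = (if j = j' then 1 else 0)"
    and v_orth1: "\<forall>i\<in>{1..k}. \<forall>j\<in>{1..card (P i) - 1}.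
                  (\<Sum>x\<in>P i. v i j x * (1 / sqrt (real (card (P i))))) = 0"
    and v_span: "\<forall>i\<in>{1..k}. \<forall>f :: 'a \<Rightarrow> real. \<exists>c :: nat \<Rightarrow> real. \<exists>c0 :: real.
                  \<forall>x\<in>P i. f x = (\<Sum>j\<in>{1..card (P i) - 1}. c j * v i j x)
                                 + c0 * (1 / sqrt (real (card (P i))))"
    and X_def: "\<forall>j\<in>{1..k}. \<forall>l\<in>{1..k}. \<forall>u\<in>P l. X j u = alpha j l"
    and N_def: "\<forall>j\<in>{1..k}. N j = (\<Sum>l\<in>{1..k}. real (card (P l)) * (alpha j l)^2)"
    and X_orth: "\<forall>j\<in>{1..k}. \<forall>j'\<in>{1..k}.
                  (\<Sum>u\<in>V. (X j u / sqrt (N j)) * (X j' u / sqrt (N j'))) = (if j = j' then 1 else 0)"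
    and X_eig: "\<forall>j\<in>{1..k}. \<forall>u\<in>V. (\<Sum>w\<in>V. laplacian V E u w * X j w) = nu j * X j u"
    and t_nonneg: "t \<ge> 0"
  shows "(\<forall>i\<in>{1..k}. \<forall>x\<in>P i. \<forall>y\<in>P i.
            ctqw_prob V E t x y =
              ctqw_prob (P i) E t x y
              + ((\<Sum>j\<in>{1..k}. (alpha j i)^4 / (N j)^2)
                 + 2 * (\<Sum>j\<in>{1..k}. \<Sum>j'\<in>{j+1..k}.
                      (alpha j i)^2 * (alpha j' i)^2 * cos (t * (nu j - nu j')) / (N j * N j')))
              - 1 / (real (card (P i)))^2
              - 2 / real (card (P i)) * (\<Sum>j\<in>{1..card (P i) - 1}. v i j x * v i j y * cos (t * lam i j))
              + 2 * (\<Sum>j\<in>{1..card (P i) - 1}. \<Sum>j'\<in>{1..k}.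
                   v i j x * v i j y * (alpha j' i)^2
                   * cos (t * (lam i j + dtilde E k P i - nu j')) / N j')
          \<and> ctqw_prob (P i) E t x y =
              (\<Sum>j\<in>{1..card (P i) - 1}. (v i j x)^2 * (v i j y)^2)
              + 1 / (real (card (P i)))^2
              + 2 * (\<Sum>j\<in>{1..card (P i) - 1}. \<Sum>j'\<in>{j+1..card (P i) - 1}.
                   v i j x * v i j y * v i j' x * v i j' y * cos (t * (lam i j - lam i j')))
              + 2 / real (card (P i)) * (\<Sum>j\<in>{1..card (P i) - 1}. v i j x * v i j y * cos (t * lam i j)))
       \<and> (\<forall>i\<in>{1..k}. \<forall>i'\<in>{1..k}. i \<noteq> i' \<longrightarrow> (\<forall>x\<in>P i. \<forall>y\<in>P i'.
            ctqw_prob V E t x y =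
              (\<Sum>j\<in>{1..k}. (alpha j i)^2 * (alpha j i')^2 / (N j)^2)
              + 2 * (\<Sum>j\<in>{1..k}. \<Sum>j'\<in>{j+1..k}.
                   alpha j i * alpha j i' * alpha j' i * alpha j' i' * cos (t * (nu j - nu j'))
                   / (N j * N j'))))"
  proof -
  define n where "n i = real (card (P i))" for i
  define J where "J i = {1..card (P i) - 1}" for i
  define ve where "ve i j z = (if z \<in> P i then v i j z else 0)" for i j z
  define Sig where "Sig = (SIGMA i:{1..k}. J i)"
  have fV: "finite V" using graph by (simp add: simple_graph_def)
  have Pne: "\<And>i. i \<in> {1..k} \<Longrightarrow> P i \<noteq> {}" and PV: "\<And>i. i \<in> {1..k} \<Longrightarrow> P i \<subseteq> V"
    using decomp by (auto simp: fully_interconnected_decomp_def)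
  have Vun: "(\<Union>i\<in>{1..k}. P i) = V" using decomp by (simp add: fully_interconnected_decomp_def)
  have disj: "\<And>i j. i \<in> {1..k} \<Longrightarrow> j \<in> {1..k} \<Longrightarrow> i \<noteq> j \<Longrightarrow> P i \<inter> P j = {}"
    using decomp by (simp add: fully_interconnected_decomp_def)
  have dich: "\<And>i j. i \<in> {1..k} \<Longrightarrow> j \<in> {1..k} \<Longrightarrow> i \<noteq> j \<Longrightarrow>
          parts_adj E P i j \<or> (\<forall>x\<in>P i. \<forall>y\<in>P j. \<not> E x y)"
    using decomp by (simp add: fully_interconnected_decomp_def)
  have fP: "\<And>i. i \<in> {1..k} \<Longrightarrow> finite (P i)" using PV fV finite_subset by blast
  have npos: "\<And>i. i \<in> {1..k} \<Longrightarrow> n i > 0" using fP Pne by (simp add: n_def card_gt_0_iff)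
  have uniq: "\<And>i i' x. i \<in> {1..k} \<Longrightarrow> i' \<in> {1..k} \<Longrightarrow> x \<in> P i \<Longrightarrow> x \<in> P i' \<Longrightarrow> i = i'"
    using disj by blast
  have inV: "\<And>x. x \<in> V \<Longrightarrow> \<exists>i\<in>{1..k}. x \<in> P i" using Vun by blast
  have sumV: "\<And>g. (\<Sum>u\<in>V. g u) = (\<Sum>l\<in>{1..k}. \<Sum>u\<in>P l. g u)"
  proof -
    fix g :: "'a \<Rightarrow> 'b::comm_monoid_add"
    have "(\<Sum>u\<in>V. g u) = sum g (\<Union>i\<in>{1..k}. P i)" using Vun by simp
    also have "\<dots> = (\<Sum>l\<in>{1..k}. \<Sum>u\<in>P l. g u)"
      by (rule sum.UNION_disjoint) (use fP disj in auto)
    finally show "(\<Sum>u\<in>V. g u) = (\<Sum>l\<in>{1..k}. \<Sum>u\<in>P l. g u)" .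
  qed
  have Nge: "\<And>j. j \<in> {1..k} \<Longrightarrow> N j \<ge> 0" using N_def by (simp add: sum_nonneg)
  have Npos: "\<And>j. j \<in> {1..k} \<Longrightarrow> N j > 0"
  proof (rule ccontr)
    fix j assume j: "j \<in> {1..k}" and "\<not> N j > 0"
    then have "N j = 0" using Nge[OF j] by simp
    have "(\<Sum>u\<in>V. (X j u / sqrt (N j)) * (X j u / sqrt (N j))) = 1" using X_orth[rule_format, OF j j] by simp
    then show False using \<open>N j = 0\<close> by simp
  qed
  have sqN: "\<And>j. j \<in> {1..k} \<Longrightarrow> sqrt (N j) * sqrt (N j) = N j" using Nge by simp
  have sqn: "\<And>i. i \<in> {1..k} \<Longrightarrow> sqrt (n i) * sqrt (n i) = n i" using npos by (simp add: less_imp_le)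
  define a where "a j l = alpha j l * sqrt (n l) / sqrt (N j)" for j l
  have rows: "\<forall>j\<in>{1..k}. \<forall>j'\<in>{1..k}. (\<Sum>l\<in>{1..k}. a j l * a j' l) = (if j = j' then 1 else 0)"
  proof (intro ballI)
    fix j j' assume j: "j \<in> {1..k}" and j': "j' \<in> {1..k}"
    have "(\<Sum>l\<in>{1..k}. a j l * a j' l) = (\<Sum>l\<in>{1..k}. \<Sum>u\<in>P l. (X j u / sqrt (N j)) * (X j' u / sqrt (N j')))"
    proof (rule sum.cong[OF refl])
      fix l assume l: "l \<in> {1..k}"
      have "(\<Sum>u\<in>P l. (X j u / sqrt (N j)) * (X j' u / sqrt (N j'))) = (\<Sum>u\<in>P l. (alpha j l / sqrt (N j)) * (alpha j' l / sqrt (N j')))"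
        using X_def j j' l by (intro sum.cong) auto
      also have "\<dots> = n l * ((alpha j l / sqrt (N j)) * (alpha j' l / sqrt (N j')))" by (simp add: n_def)
      also have "\<dots> = a j l * a j' l" unfolding a_def using sqn[OF l]
        by (simp add: field_simps)
      finally show "a j l * a j' l = (\<Sum>u\<in>P l. (X j u / sqrt (N j)) * (X j' u / sqrt (N j')))" by simp
    qed
    also have "\<dots> = (\<Sum>u\<in>V. (X j u / sqrt (N j)) * (X j' u / sqrt (N j')))" by (rule sumV[symmetric])
    also have "\<dots> = (if j = j' then 1 else 0)" using X_orth j j' by blast
    finally show "(\<Sum>l\<in>{1..k}. a j l * a j' l) = (if j = j' then 1 else 0)" .
  qed
  have cols: "\<forall>l\<in>{1..k}. \<forall>l'\<in>{1..k}. (\<Sum>j\<in>{1..k}. a j l * a j l') = (if l = l' then 1 else 0)"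
    by (rule orth_rows_cols[OF rows])
  have Xcompl: "\<And>l l'. l \<in> {1..k} \<Longrightarrow> l' \<in> {1..k} \<Longrightarrow>
     (\<Sum>j\<in>{1..k}. alpha j l * alpha j l' / N j) = (if l = l' then 1 / n l else 0)"
  proof -
    fix l l' assume l: "l \<in> {1..k}" and l': "l' \<in> {1..k}"
    have "(\<Sum>j\<in>{1..k}. a j l * a j l') = sqrt (n l) * sqrt (n l') * (\<Sum>j\<in>{1..k}. alpha j l * alpha j l' / N j)"
      unfolding sum_distrib_left
    proof (rule sum.cong[OF refl])
      fix j assume j: "j \<in> {1..k}"
      show "a j l * a j l' = sqrt (n l) * sqrt (n l') * (alpha j l * alpha j l' / N j)"
        unfolding a_def using sqN[OF j] by (simp add: field_simps)
    qed
    then have H: "sqrt (n l) * sqrt (n l') * (\<Sum>j\<in>{1..k}. alpha j l * alpha j l' / N j) = (if l = l' then 1 else 0)"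
      using cols l l' by simp
    show "(\<Sum>j\<in>{1..k}. alpha j l * alpha j l' / N j) = (if l = l' then 1 / n l else 0)"
    proof (cases "l = l'")
      case True
      then show ?thesis using H sqn[OF l] npos[OF l] by (simp add: field_simps)
    next
      case False
      then show ?thesis using H npos[OF l] npos[OF l'] by simp
    qed
  qed
  have Pcompl: "\<And>i x y. i \<in> {1..k} \<Longrightarrow> x \<in> P i \<Longrightarrow> y \<in> P i \<Longrightarrow>
       (\<Sum>j\<in>J i. v i j x * v i j y) + 1 / n i = (if x = y then 1 else 0)"
    unfolding J_def n_def
    by (rule compl_from_span[OF fP Pne]) (use v_orth v_orth1 v_span in auto)
  have sumv0: "\<And>i j. i \<in> {1..k} \<Longrightarrow> j \<in> J i \<Longrightarrow> (\<Sum>z\<in>P i. v i j z) = 0"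
  proof -
    fix i j assume i: "i \<in> {1..k}" and j: "j \<in> J i"
    have "(\<Sum>z\<in>P i. v i j z) / sqrt (n i) = 0" using v_orth1 i j
      by (simp add: sum_divide_distrib J_def n_def)
    then show "(\<Sum>z\<in>P i. v i j z) = 0" using npos[OF i] by simp
  qed
  have deg: "\<And>i x. i \<in> {1..k} \<Longrightarrow> x \<in> P i \<Longrightarrow>
      real (card {z \<in> V. E x z}) = real (card {z \<in> P i. E x z}) + dtilde E k P i"
  proof -
    fix i x assume i: "i \<in> {1..k}" and x: "x \<in> P i"
    have cnt: "\<And>S. finite S \<Longrightarrow> real (card {z \<in> S. E x z}) = (\<Sum>z\<in>S. if E x z then 1 else 0)"
      by (simp add: sum.inter_filter[symmetric])
    have "real (card {z \<in> V. E x z}) = (\<Sum>l\<in>{1..k}. \<Sum>z\<in>P l. if E x z then 1 else 0)"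
      using cnt[OF fV] sumV by simp
    also have "\<dots> = (\<Sum>z\<in>P i. if E x z then 1 else 0) + (\<Sum>l\<in>{1..k} - {i}. \<Sum>z\<in>P l. if E x z then 1 else 0)"
      using i by (simp add: sum.remove)
    also have "(\<Sum>l\<in>{1..k} - {i}. \<Sum>z\<in>P l. if E x z then 1 else 0) = (\<Sum>l\<in>{1..k} - {i}. if parts_adj E P i l then real (card (P l)) else 0)"
    proof (rule sum.cong[OF refl])
      fix l assume l: "l \<in> {1..k} - {i}"
      show "(\<Sum>z\<in>P l. if E x z then 1 else 0) = (if parts_adj E P i l then real (card (P l)) else 0)"
      proof (cases "parts_adj E P i l")
        case True
        then have "\<forall>z\<in>P l. E x z" using x by (simp add: parts_adj_def)
        then show ?thesis using True by simp
      next
        case False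
        then have "\<forall>z\<in>P l. \<not> E x z" using dich[of i l] i l x by auto
        then show ?thesis using False by simp
      qed
    qed
    also have "\<dots> = dtilde E k P i" unfolding dtilde_def
      by (simp add: sum.inter_filter[symmetric])
    finally show "real (card {z \<in> V. E x z}) = real (card {z \<in> P i. E x z}) + dtilde E k P i"
      using cnt[OF fP[OF i]] by simp
  qed
  have veig: "\<forall>p\<in>Sig. \<forall>x\<in>V. (\<Sum>z\<in>V. laplacian V E x z * ve (fst p) (snd p) z)
        = (lam (fst p) (snd p) + dtilde E k P (fst p)) * ve (fst p) (snd p) x"
  proof (intro ballI)
    fix p x assume p: "p \<in> Sig" and x: "x \<in> V"
    obtain i j where pij: "p = (i, j)" and i: "i \<in> {1..k}" and j: "j \<in> J i" using p Sig_def by auto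
    have "(\<Sum>z\<in>V. laplacian V E x z * ve i j z) = (\<Sum>z\<in>V. if z \<in> P i then laplacian V E x z * v i j z else 0)"
      unfolding ve_def by (rule sum.cong) auto
    also have "\<dots> = (\<Sum>z\<in>V \<inter> P i. laplacian V E x z * v i j z)"
      using fV by (simp add: sum.inter_restrict)
    also have "V \<inter> P i = P i" using PV[OF i] by auto
    finally have S: "(\<Sum>z\<in>V. laplacian V E x z * ve i j z) = (\<Sum>z\<in>P i. laplacian V E x z * v i j z)" .
    show "(\<Sum>z\<in>V. laplacian V E x z * ve (fst p) (snd p) z)
        = (lam (fst p) (snd p) + dtilde E k P (fst p)) * ve (fst p) (snd p) x"
    proof (cases "x \<in> P i")
      case True
      have "(\<Sum>z\<in>P i. laplacian V E x z * v i j z) = (\<Sum>z\<in>P i. laplacian (P i) E x z * v i j z + (if z = x then dtilde E k P i * v i j x else 0))"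
      proof (rule sum.cong[OF refl])
        fix z assume z: "z \<in> P i"
        show "laplacian V E x z * v i j z = laplacian (P i) E x z * v i j z + (if z = x then dtilde E k P i * v i j x else 0)"
          using deg[OF i True] by (auto simp: laplacian_def algebra_simps)
      qed
      also have "\<dots> = lam i j * v i j x + dtilde E k P i * v i j x"
        using v_eig i j True fP[OF i] by (simp add: sum.distrib J_def)
      finally show ?thesis using S True pij by (simp add: ve_def algebra_simps)
    next
      case False
      obtain l where l: "l \<in> {1..k}" "x \<in> P l" using inV[OF x] by blast
      have li: "l \<noteq> i" using False l by auto
      have "(\<Sum>z\<in>P i. laplacian V E x z * v i j z) = 0"
      proof (cases "parts_adj E P l i")
        case True
        then have "(\<Sum>z\<in>P i. laplacian V E x z * v i j z) = (\<Sum>z\<in>P i. - v i j z)"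
          using False l by (intro sum.cong) (auto simp: laplacian_def parts_adj_def)
        then show ?thesis using sumv0[OF i j] by (simp add: sum_negf)
      next
        case c: False
        then have "\<forall>z\<in>P i. \<not> E x z" using dich[of l i] l i li by auto
        then have "(\<Sum>z\<in>P i. laplacian V E x z * v i j z) = (\<Sum>z\<in>P i. 0)"
          using False by (intro sum.cong) (auto simp: laplacian_def)
        then show ?thesis by simp
      qed
      then show ?thesis using S False pij by (simp add: ve_def)
    qed
  qed
  have Xeig': "\<forall>j\<in>{1..k}. \<forall>x\<in>V. (\<Sum>z\<in>V. laplacian V E x z * (X j z / sqrt (N j))) = nu j * (X j x / sqrt (N j))"
  proof (intro ballI)
    fix j x assume j: "j \<in> {1..k}" and x: "x \<in> V"
    have "(\<Sum>z\<in>V. laplacian V E x z * (X j z / sqrt (N j))) = (\<Sum>z\<in>V. laplacian V E x z * X j z) / sqrt (N j)"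
      by (simp add: sum_divide_distrib)
    then show "(\<Sum>z\<in>V. laplacian V E x z * (X j z / sqrt (N j))) = nu j * (X j x / sqrt (N j))"
      using X_eig j x by simp
  qed
  have ceig: "\<And>i. i \<in> {1..k} \<Longrightarrow> \<forall>d\<in>{0::nat}. \<forall>x\<in>P i. (\<Sum>z\<in>P i. laplacian (P i) E x z * (1 / sqrt (n i))) = 0 * (1 / sqrt (n i))"
  proof (intro ballI)
    fix i d x assume i: "i \<in> {1..k}" and x: "x \<in> P i"
    have irr: "\<not> E x x" using graph by (simp add: simple_graph_def)
    have "(\<Sum>z\<in>P i. laplacian (P i) E x z) = (\<Sum>z\<in>P i. (if x = z then real (card {w \<in> P i. E x w}) else 0) - (if E x z then 1 else 0))"
      using irr by (intro sum.cong) (auto simp: laplacian_def)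
    also have "\<dots> = 0" using x fP[OF i] by (simp add: sum_subtractf sum.inter_filter[symmetric])
    finally show "(\<Sum>z\<in>P i. laplacian (P i) E x z * (1 / sqrt (n i))) = 0 * (1 / sqrt (n i))"
      by (simp add: sum_divide_distrib[symmetric])
  qed
  have Vcompl: "\<forall>x\<in>V. \<forall>y\<in>V. (\<Sum>p\<in>Sig. ve (fst p) (snd p) x * ve (fst p) (snd p) y)
        + (\<Sum>j\<in>{1..k}. X j x / sqrt (N j) * (X j y / sqrt (N j))) = (if x = y then 1 else 0)"
  proof (intro ballI)
    fix x y assume x: "x \<in> V" and y: "y \<in> V"
    obtain i where i: "i \<in> {1..k}" "x \<in> P i" using inV[OF x] by blast
    obtain i' where i': "i' \<in> {1..k}" "y \<in> P i'" using inV[OF y] by blast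
    have fJ: "\<And>i. finite (J i)" by (simp add: J_def)
    have "(\<Sum>p\<in>Sig. ve (fst p) (snd p) x * ve (fst p) (snd p) y) = (\<Sum>i''\<in>{1..k}. \<Sum>j\<in>J i''. ve i'' j x * ve i'' j y)"
      unfolding Sig_def by (subst sum.Sigma) (auto simp: fJ split_def)
    also have "\<dots> = (\<Sum>i''\<in>{1..k}. if i'' = i then (\<Sum>j\<in>J i. ve i j x * ve i j y) else 0)"
    proof (rule sum.cong[OF refl])
      fix i'' assume i'': "i'' \<in> {1..k}"
      show "(\<Sum>j\<in>J i''. ve i'' j x * ve i'' j y) = (if i'' = i then (\<Sum>j\<in>J i. ve i j x * ve i j y) else 0)"
      proof (cases "i'' = i")
        case False
        then have "x \<notin> P i''" using uniq[OF i'' i(1)] i(2) by blast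
        then show ?thesis using False by (simp add: ve_def)
      qed simp
    qed
    also have "\<dots> = (\<Sum>j\<in>J i. ve i j x * ve i j y)" using i by simp
    finally have A: "(\<Sum>p\<in>Sig. ve (fst p) (snd p) x * ve (fst p) (snd p) y) = (\<Sum>j\<in>J i. ve i j x * ve i j y)" .
    have "(\<Sum>j\<in>{1..k}. X j x / sqrt (N j) * (X j y / sqrt (N j))) = (\<Sum>j\<in>{1..k}. alpha j i * alpha j i' / N j)"
    proof (rule sum.cong[OF refl])
      fix j assume j: "j \<in> {1..k}"
      show "X j x / sqrt (N j) * (X j y / sqrt (N j)) = alpha j i * alpha j i' / N j"
        using X_def j i i' sqN[OF j] by (simp add: field_simps)
    qed
    also have "\<dots> = (if i = i' then 1 / n i else 0)" using Xcompl i i' by simp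
    finally have B: "(\<Sum>j\<in>{1..k}. X j x / sqrt (N j) * (X j y / sqrt (N j))) = (if i = i' then 1 / n i else 0)" .
    show "(\<Sum>p\<in>Sig. ve (fst p) (snd p) x * ve (fst p) (snd p) y)
        + (\<Sum>j\<in>{1..k}. X j x / sqrt (N j) * (X j y / sqrt (N j))) = (if x = y then 1 else 0)"
    proof (cases "i = i'")
      case True
      have "(\<Sum>j\<in>J i. ve i j x * ve i j y) = (\<Sum>j\<in>J i. v i j x * v i j y)"
        using i i' True by (simp add: ve_def)
      then show ?thesis using A B True Pcompl[of i x y] i i' by simp
    next
      case False
      have "y \<notin> P i" using uniq i i' False by blast
      then have "(\<Sum>j\<in>J i. ve i j x * ve i j y) = 0" by (simp add: ve_def)
      moreover have "x \<noteq> y" using \<open>y \<notin> P i\<close> i by auto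
      ultimately show ?thesis using A B False by simp
    qed
  qed
  have fJ: "\<And>i. finite (J i)" by (simp add: J_def)
  have fSig: "finite Sig" unfolding Sig_def using fJ by auto
  have sig_red: "\<And>(g :: nat \<times> nat \<Rightarrow> complex) i. i \<in> {1..k} \<Longrightarrow> (\<forall>p\<in>Sig. fst p \<noteq> i \<longrightarrow> g p = 0)
      \<Longrightarrow> sum g Sig = (\<Sum>j\<in>J i. g (i, j))"
  proof -
    fix g :: "nat \<times> nat \<Rightarrow> complex" and i assume i: "i \<in> {1..k}" and z: "\<forall>p\<in>Sig. fst p \<noteq> i \<longrightarrow> g p = 0"
    have "sum g Sig = (\<Sum>i''\<in>{1..k}. \<Sum>j\<in>J i''. g (i'', j))"
      unfolding Sig_def by (subst sum.Sigma) (auto simp: fJ split_def)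
    also have "\<dots> = (\<Sum>i''\<in>{1..k}. if i'' = i then (\<Sum>j\<in>J i. g (i, j)) else 0)"
    proof (rule sum.cong[OF refl])
      fix i'' assume i'': "i'' \<in> {1..k}"
      show "(\<Sum>j\<in>J i''. g (i'', j)) = (if i'' = i then (\<Sum>j\<in>J i. g (i, j)) else 0)"
        using z i'' by (auto simp: Sig_def)
    qed
    also have "\<dots> = (\<Sum>j\<in>J i. g (i, j))" using i by simp
    finally show "sum g Sig = (\<Sum>j\<in>J i. g (i, j))" .
  qed
  have opV: "\<And>x y. x \<in> V \<Longrightarrow> y \<in> V \<Longrightarrow> ctqw_op V E t x y =
      (\<Sum>p\<in>Sig. complex_of_real (ve (fst p) (snd p) x * ve (fst p) (snd p) y)
          * exp (\<i> * complex_of_real (t * (lam (fst p) (snd p) + dtilde E k P (fst p)))))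
    + (\<Sum>j\<in>{1..k}. complex_of_real (X j x / sqrt (N j) * (X j y / sqrt (N j))) * exp (\<i> * complex_of_real (t * nu j)))"
    by (rule ctqw_spectral[OF fV fSig _ veig Xeig' Vcompl]) auto
  have part1: "\<forall>i\<in>{1..k}. \<forall>x\<in>P i. \<forall>y\<in>P i.
            ctqw_prob V E t x y =
              ctqw_prob (P i) E t x y
              + ((\<Sum>j\<in>{1..k}. (alpha j i)^4 / (N j)^2)
                 + 2 * (\<Sum>j\<in>{1..k}. \<Sum>j'\<in>{j+1..k}.
                      (alpha j i)^2 * (alpha j' i)^2 * cos (t * (nu j - nu j')) / (N j * N j')))
              - 1 / (real (card (P i)))^2
              - 2 / real (card (P i)) * (\<Sum>j\<in>{1..card (P i) - 1}. v i j x * v i j y * cos (t * lam i j))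
              + 2 * (\<Sum>j\<in>{1..card (P i) - 1}. \<Sum>j'\<in>{1..k}.
                   v i j x * v i j y * (alpha j' i)^2
                   * cos (t * (lam i j + dtilde E k P i - nu j')) / N j')
          \<and> ctqw_prob (P i) E t x y =
              (\<Sum>j\<in>{1..card (P i) - 1}. (v i j x)^2 * (v i j y)^2)
              + 1 / (real (card (P i)))^2
              + 2 * (\<Sum>j\<in>{1..card (P i) - 1}. \<Sum>j'\<in>{j+1..card (P i) - 1}.
                   v i j x * v i j y * v i j' x * v i j' y * cos (t * (lam i j - lam i j')))
              + 2 / real (card (P i)) * (\<Sum>j\<in>{1..card (P i) - 1}. v i j x * v i j y * cos (t * lam i j))"
  proof (intro ballI)
    fix i x y assume i: "i \<in> {1..k}" and x: "x \<in> P i" and y: "y \<in> P i"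
    have xV: "x \<in> V" and yV: "y \<in> V" using PV[OF i] x y by auto
    have e1: "1 / sqrt (n i) * (1 / sqrt (n i)) = 1 / n i" using sqn[OF i] by (simp add: field_simps)
    have opPi: "ctqw_op (P i) E t x y = (\<Sum>j\<in>J i. complex_of_real (v i j x * v i j y) * exp (\<i> * complex_of_real (t * lam i j)))
        + (\<Sum>d\<in>{0::nat}. complex_of_real (1 / sqrt (n i) * (1 / sqrt (n i))) * exp (\<i> * complex_of_real (t * 0)))"
    proof (rule ctqw_spectral[where w = "\<lambda>_ _. 1 / sqrt (n i)" and rho = "\<lambda>_. 0", OF fP[OF i] fJ])
      show "\<forall>a\<in>J i. \<forall>x\<in>P i. (\<Sum>z\<in>P i. laplacian (P i) E x z * v i a z) = lam i a * v i a x"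
        using v_eig i by (simp add: J_def)
      show "\<forall>d\<in>{0::nat}. \<forall>x\<in>P i. (\<Sum>z\<in>P i. laplacian (P i) E x z * (1 / sqrt (n i))) = 0 * (1 / sqrt (n i))"
        using ceig[OF i] .
      show "\<forall>x\<in>P i. \<forall>y\<in>P i. (\<Sum>a\<in>J i. v i a x * v i a y) + (\<Sum>d\<in>{0::nat}. 1 / sqrt (n i) * (1 / sqrt (n i))) = (if x = y then 1 else 0)"
        using Pcompl[OF i] e1 by simp
    qed (use x y in auto)
    define Q where "Q = (\<Sum>j\<in>J i. \<Sum>j'\<in>J i. v i j x * v i j y * (v i j' x * v i j' y) * cos (t * lam i j - t * lam i j'))"
    have probPi: "ctqw_prob (P i) E t x y = Q + 1 / (real (card (P i)))^2
        + 2 / real (card (P i)) * (\<Sum>j\<in>{1..card (P i) - 1}. v i j x * v i j y * cos (t * lam i j))"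
    proof -
      have "ctqw_prob (P i) E t x y = Q + (1 / sqrt (n i) * (1 / sqrt (n i))) * (1 / sqrt (n i) * (1 / sqrt (n i)))
          + 2 * (\<Sum>j\<in>J i. v i j x * v i j y * (1 / sqrt (n i) * (1 / sqrt (n i))) * cos (t * lam i j))"
        unfolding ctqw_prob_def opPi modsq_two Q_def by simp
      also have "\<dots> = Q + 1 / (real (card (P i)))^2
        + 2 / real (card (P i)) * (\<Sum>j\<in>{1..card (P i) - 1}. v i j x * v i j y * cos (t * lam i j))"
        unfolding e1 by (simp add: n_def J_def sum_distrib_left power2_eq_square mult_ac)
      finally show ?thesis .
    qed
    have Qtri: "Q = (\<Sum>j\<in>{1..card (P i) - 1}. (v i j x)^2 * (v i j y)^2)
              + 2 * (\<Sum>j\<in>{1..card (P i) - 1}. \<Sum>j'\<in>{j+1..card (P i) - 1}.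
                   v i j x * v i j y * v i j' x * v i j' y * cos (t * (lam i j - lam i j')))"
    proof -
      have "Q = (\<Sum>j\<in>{1..card (P i) - 1}. v i j x * v i j y * (v i j x * v i j y) * cos (t * lam i j - t * lam i j))
            + 2 * (\<Sum>j\<in>{1..card (P i) - 1}. \<Sum>j'\<in>{j+1..card (P i) - 1}. v i j x * v i j y * (v i j' x * v i j' y) * cos (t * lam i j - t * lam i j'))"
        unfolding Q_def J_def
        by (rule tri_sum) (simp add: mult_ac cos_diff)
      then show ?thesis by (simp add: power2_eq_square mult_ac right_diff_distrib)
    qed
    define e where "e j = alpha j i * alpha j i / N j" for j
    have Xe: "\<And>j. j \<in> {1..k} \<Longrightarrow> X j x / sqrt (N j) * (X j y / sqrt (N j)) = e j"
      using X_def i x y sqN unfolding e_def by (simp add: field_simps)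
    have opV': "ctqw_op V E t x y = (\<Sum>j\<in>J i. complex_of_real (v i j x * v i j y) * exp (\<i> * complex_of_real (t * (lam i j + dtilde E k P i))))
        + (\<Sum>j\<in>{1..k}. complex_of_real (e j) * exp (\<i> * complex_of_real (t * nu j)))"
    proof -
      have "(\<Sum>p\<in>Sig. complex_of_real (ve (fst p) (snd p) x * ve (fst p) (snd p) y)
          * exp (\<i> * complex_of_real (t * (lam (fst p) (snd p) + dtilde E k P (fst p)))))
          = (\<Sum>j\<in>J i. complex_of_real (ve i j x * ve i j y) * exp (\<i> * complex_of_real (t * (lam i j + dtilde E k P i))))"
      proof -
        define g where "g p = complex_of_real (ve (fst p) (snd p) x * ve (fst p) (snd p) y)
          * exp (\<i> * complex_of_real (t * (lam (fst p) (snd p) + dtilde E k P (fst p))))" for p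
        have "sum g Sig = (\<Sum>j\<in>J i. g (i, j))"
        proof (rule sig_red[OF i], intro ballI impI)
          fix p assume p: "p \<in> Sig" and "fst p \<noteq> i"
          have "fst p \<in> {1..k}" using p by (auto simp: Sig_def)
          then have "x \<notin> P (fst p)" using uniq[of "fst p" i x] i x \<open>fst p \<noteq> i\<close> by blast
          then show "g p = 0" by (simp add: ve_def g_def)
        qed
        then show ?thesis unfolding g_def by simp
      qed
      moreover have "(\<Sum>j\<in>{1..k}. complex_of_real (X j x / sqrt (N j) * (X j y / sqrt (N j))) * exp (\<i> * complex_of_real (t * nu j)))
          = (\<Sum>j\<in>{1..k}. complex_of_real (e j) * exp (\<i> * complex_of_real (t * nu j)))"
        using Xe by simp
      ultimately show ?thesis unfolding opV[OF xV yV] using x y by (simp add: ve_def)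
    qed
    define R where "R = (\<Sum>j\<in>{1..k}. \<Sum>j'\<in>{1..k}. e j * e j' * cos (t * nu j - t * nu j'))"
    define C where "C = (\<Sum>j\<in>J i. \<Sum>j'\<in>{1..k}. v i j x * v i j y * e j' * cos (t * (lam i j + dtilde E k P i) - t * nu j'))"
    have Q': "(\<Sum>j\<in>J i. \<Sum>j'\<in>J i. v i j x * v i j y * (v i j' x * v i j' y) * cos (t * (lam i j + dtilde E k P i) - t * (lam i j' + dtilde E k P i))) = Q"
      unfolding Q_def by (simp add: algebra_simps)
    have probV: "ctqw_prob V E t x y = Q + R + 2 * C"
      unfolding ctqw_prob_def opV' modsq_two Q' R_def C_def by simp
    have Rtri: "R = (\<Sum>j\<in>{1..k}. (alpha j i)^4 / (N j)^2)
                 + 2 * (\<Sum>j\<in>{1..k}. \<Sum>j'\<in>{j+1..k}.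
                      (alpha j i)^2 * (alpha j' i)^2 * cos (t * (nu j - nu j')) / (N j * N j'))"
    proof -
      have "R = (\<Sum>j\<in>{1..k}. e j * e j * cos (t * nu j - t * nu j)) + 2 * (\<Sum>j\<in>{1..k}. \<Sum>j'\<in>{j+1..k}. e j * e j' * cos (t * nu j - t * nu j'))"
        unfolding R_def by (rule tri_sum) (simp add: mult_ac cos_diff)
      moreover have p4: "\<And>z::real. z ^ 4 = z * (z * (z * z))" by (simp add: eval_nat_numeral)
      ultimately show ?thesis unfolding e_def
        by (simp add: power2_eq_square right_diff_distrib field_simps)
    qed
    have Cf: "C = (\<Sum>j\<in>{1..card (P i) - 1}. \<Sum>j'\<in>{1..k}.
                   v i j x * v i j y * (alpha j' i)^2
                   * cos (t * (lam i j + dtilde E k P i - nu j')) / N j')"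
      unfolding C_def e_def J_def by (simp add: power2_eq_square right_diff_distrib distrib_left)
    show "ctqw_prob V E t x y =
              ctqw_prob (P i) E t x y
              + ((\<Sum>j\<in>{1..k}. (alpha j i)^4 / (N j)^2)
                 + 2 * (\<Sum>j\<in>{1..k}. \<Sum>j'\<in>{j+1..k}.
                      (alpha j i)^2 * (alpha j' i)^2 * cos (t * (nu j - nu j')) / (N j * N j')))
              - 1 / (real (card (P i)))^2
              - 2 / real (card (P i)) * (\<Sum>j\<in>{1..card (P i) - 1}. v i j x * v i j y * cos (t * lam i j))
              + 2 * (\<Sum>j\<in>{1..card (P i) - 1}. \<Sum>j'\<in>{1..k}.
                   v i j x * v i j y * (alpha j' i)^2
                   * cos (t * (lam i j + dtilde E k P i - nu j')) / N j')
          \<and> ctqw_prob (P i) E t x y =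
              (\<Sum>j\<in>{1..card (P i) - 1}. (v i j x)^2 * (v i j y)^2)
              + 1 / (real (card (P i)))^2
              + 2 * (\<Sum>j\<in>{1..card (P i) - 1}. \<Sum>j'\<in>{j+1..card (P i) - 1}.
                   v i j x * v i j y * v i j' x * v i j' y * cos (t * (lam i j - lam i j')))
              + 2 / real (card (P i)) * (\<Sum>j\<in>{1..card (P i) - 1}. v i j x * v i j y * cos (t * lam i j))"
      unfolding probV probPi Qtri Rtri Cf by simp
  qed
  have part2: "\<forall>i\<in>{1..k}. \<forall>i'\<in>{1..k}. i \<noteq> i' \<longrightarrow> (\<forall>x\<in>P i. \<forall>y\<in>P i'.
            ctqw_prob V E t x y =
              (\<Sum>j\<in>{1..k}. (alpha j i)^2 * (alpha j i')^2 / (N j)^2)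
              + 2 * (\<Sum>j\<in>{1..k}. \<Sum>j'\<in>{j+1..k}.
                   alpha j i * alpha j i' * alpha j' i * alpha j' i' * cos (t * (nu j - nu j'))
                   / (N j * N j')))"
  proof (intro ballI impI)
    fix i i' x y assume i: "i \<in> {1..k}" and i': "i' \<in> {1..k}" and ii: "i \<noteq> i'" and x: "x \<in> P i" and y: "y \<in> P i'"
    have xV: "x \<in> V" and yV: "y \<in> V" using PV i i' x y by auto
    define e where "e j = alpha j i * alpha j i' / N j" for j
    have Xe: "\<And>j. j \<in> {1..k} \<Longrightarrow> X j x / sqrt (N j) * (X j y / sqrt (N j)) = e j"
      using X_def i i' x y sqN unfolding e_def by (simp add: field_simps)
    have A0: "(\<Sum>p\<in>Sig. complex_of_real (ve (fst p) (snd p) x * ve (fst p) (snd p) y)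
          * exp (\<i> * complex_of_real (t * (lam (fst p) (snd p) + dtilde E k P (fst p))))) = 0"
    proof (rule sum.neutral, rule ballI)
      fix p assume p: "p \<in> Sig"
      have "\<not> (x \<in> P (fst p) \<and> y \<in> P (fst p))"
        using uniq[of "fst p" i x] uniq[of "fst p" i' y] i i' x y ii p by (auto simp: Sig_def)
      then show "complex_of_real (ve (fst p) (snd p) x * ve (fst p) (snd p) y)
          * exp (\<i> * complex_of_real (t * (lam (fst p) (snd p) + dtilde E k P (fst p)))) = 0"
        by (auto simp: ve_def)
    qed
    have opV': "ctqw_op V E t x y = (\<Sum>j\<in>({}::nat set). complex_of_real 0 * exp (\<i> * complex_of_real 0))
        + (\<Sum>j\<in>{1..k}. complex_of_real (e j) * exp (\<i> * complex_of_real (t * nu j)))"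
      unfolding opV[OF xV yV] A0 using Xe by simp
    have "ctqw_prob V E t x y = (\<Sum>j\<in>{1..k}. \<Sum>j'\<in>{1..k}. e j * e j' * cos (t * nu j - t * nu j'))"
      unfolding ctqw_prob_def opV' modsq_two by simp
    also have "\<dots> = (\<Sum>j\<in>{1..k}. e j * e j * cos (t * nu j - t * nu j)) + 2 * (\<Sum>j\<in>{1..k}. \<Sum>j'\<in>{j+1..k}. e j * e j' * cos (t * nu j - t * nu j'))"
      by (rule tri_sum) (simp add: mult_ac cos_diff)
    also have "\<dots> = (\<Sum>j\<in>{1..k}. (alpha j i)^2 * (alpha j i')^2 / (N j)^2)
              + 2 * (\<Sum>j\<in>{1..k}. \<Sum>j'\<in>{j+1..k}.
                   alpha j i * alpha j i' * alpha j' i * alpha j' i' * cos (t * (nu j - nu j'))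
                   / (N j * N j'))"
      unfolding e_def by (simp add: power2_eq_square right_diff_distrib field_simps)
    finally show "ctqw_prob V E t x y = (\<Sum>j\<in>{1..k}. (alpha j i)^2 * (alpha j i')^2 / (N j)^2)
              + 2 * (\<Sum>j\<in>{1..k}. \<Sum>j'\<in>{j+1..k}.
                   alpha j i * alpha j i' * alpha j' i * alpha j' i' * cos (t * (nu j - nu j'))
                   / (N j * N j'))" .
  qed
  show ?thesis using part1 part2 by blast
qed

end
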